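(* Let $0<\varepsilon<\pi/2$ and $0<\eta<\min\{\pi/4,\varepsilon/2\}$. Then there exists a constant $c>0$ such that $$c(|\lambda|^{1/2}+\tilde A)^3\le|\det L|\qquad\text{for all }\lambda\in\Sigma_\varepsilon,\ \xi'\in\tilde\Sigma_\eta^{n-1}.$$
   Context: $\rho_\pm,\mu_\pm>0$ are constants. $\Sigma_\varepsilon=\{\lambda\in\mathbb C\setminus\{0\}:|\arg\lambda|<\pi-\varepsilon\}$, $\tilde\Sigma_\eta=\{z\in\mathbb C\setminus\{0\}:|\arg z|<\eta\}\cup\{z\in\mathbb C\setminus\{0\}:\pi-\eta<|\arg z|\}$, and $\xi'=(\xi_1,\dots,\xi_{n-1})\in\tilde\Sigma_\eta^{n-1}$. Set $A=\sqrt{\sum_{j=1}^{n-1}\xi_j^2}$, $B_\pm=\sqrt{\rho_\pm\mu_\pm^{-1}\lambda+A^2}$ (square roots with positive real part), $\tilde A=\sqrt{\sum_{j=1}^{n-1}|\xi_j|^2}$, and $$L=\begin{bmatrix}\mu_+(B_++A)&\mu_+(B_+^2+A^2)&-\mu_-(B_-+A)&-\mu_-(B_-^2+A^2)\\ \mu_+(B_+-A)&-2\mu_+AB_+&\mu_-(B_--A)&-2\mu_-AB_-\\ 1&B_+&1&B_-\\ 0&1&0&-1\end{bmatrix}.$$ *)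

theory Defs
  imports "HOL-Analysis.Analysis"
begin

definition Sigma_sec :: "real \<Rightarrow> complex set" where
  "Sigma_sec \<epsilon> = {lam. lam \<noteq> 0 \<and> \<bar>Arg lam\<bar> < pi - \<epsilon>}"

definition Sigma_tilde :: "real \<Rightarrow> complex set" where
  "Sigma_tilde \<eta> = {z. z \<noteq> 0 \<and> (\<bar>Arg z\<bar> < \<eta> \<or> pi - \<eta> < \<bar>Arg z\<bar>)}"

definition A_sym :: "complex ^ 'm \<Rightarrow> complex" where
  "A_sym \<xi> = csqrt (\<Sum>j\<in>UNIV. (\<xi> $ j)^2)"

definition B_sym :: "real \<Rightarrow> real \<Rightarrow> complex \<Rightarrow> complex ^ 'm \<Rightarrow> complex" where
  "B_sym \<rho> \<mu> lam \<xi> = csqrt (complex_of_real (\<rho> / \<mu>) * lam + (A_sym \<xi>)^2)"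

definition A_tilde :: "complex ^ 'm \<Rightarrow> real" where
  "A_tilde \<xi> = sqrt (\<Sum>j\<in>UNIV. (cmod (\<xi> $ j))^2)"

definition L_mat :: "real \<Rightarrow> real \<Rightarrow> real \<Rightarrow> real \<Rightarrow> complex \<Rightarrow> complex ^ 'm \<Rightarrow> complex ^ 4 ^ 4" where
  "L_mat \<rho>p \<rho>m \<mu>p \<mu>m lam \<xi> =
    (let A = A_sym \<xi>; Bp = B_sym \<rho>p \<mu>p lam \<xi>; Bm = B_sym \<rho>m \<mu>m lam \<xi>;
         mp = complex_of_real \<mu>p; mm = complex_of_real \<mu>m in
     vector [
       vector [mp * (Bp + A), mp * (Bp^2 + A^2), - mm * (Bm + A), - mm * (Bm^2 + A^2)],
       vector [mp * (Bp - A), - 2 * mp * A * Bp, mm * (Bm - A), - 2 * mm * A * Bm],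
       vector [1, Bp, 1, Bm],
       vector [0, 1, 0, -1]])"

end

theory Submission
  imports Defs
begin

lemma rcis_cis_mult: "rcis r t * cis u = rcis r (t + u)"
  by (simp add: rcis_def cis_mult mult.assoc)

lemma sector_lower:
  fixes z :: "'i \<Rightarrow> complex"
  assumes "finite I" "\<And>i. i \<in> I \<Longrightarrow> z i = rcis (r i) (t i)" "\<And>i. i \<in> I \<Longrightarrow> r i \<ge> 0"
    "\<And>i. i \<in> I \<Longrightarrow> \<bar>t i - m\<bar> \<le> \<delta>" "\<delta> \<le> pi"
  shows "cos \<delta> * (\<Sum>i\<in>I. r i) \<le> cmod (\<Sum>i\<in>I. z i)"
proof -
  have "cos \<delta> * (\<Sum>i\<in>I. r i) = (\<Sum>i\<in>I. r i * cos \<delta>)"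
    by (simp add: sum_distrib_left mult.commute)
  also have "\<dots> \<le> (\<Sum>i\<in>I. r i * cos (t i - m))"
  proof (rule sum_mono, rule mult_left_mono)
    fix i assume i: "i \<in> I"
    have "cos \<delta> \<le> cos \<bar>t i - m\<bar>"
      by (rule cos_monotone_0_pi_le) (use assms(4)[OF i] assms(5) in auto)
    then show "cos \<delta> \<le> cos (t i - m)" by simp
    show "0 \<le> r i" using assms(3)[OF i] .
  qed
  also have "\<dots> = Re ((\<Sum>i\<in>I. z i) * cis (-m))"
    by (simp add: sum_distrib_right assms(2) rcis_cis_mult)
  also have "\<dots> \<le> cmod ((\<Sum>i\<in>I. z i) * cis (-m))" by (rule complex_Re_le_cmod)
  also have "\<dots> = cmod (\<Sum>i\<in>I. z i)" by (simp add: norm_mult)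
  finally show ?thesis .
qed

lemma sector_angle:
  fixes z :: "'i \<Rightarrow> complex"
  assumes "finite I" "\<And>i. i \<in> I \<Longrightarrow> z i = rcis (r i) (t i)" "\<And>i. i \<in> I \<Longrightarrow> r i \<ge> 0"
    "\<And>i. i \<in> I \<Longrightarrow> a \<le> t i" "\<And>i. i \<in> I \<Longrightarrow> t i \<le> b" "a \<le> b" "b - a < pi"
    "(\<Sum>i\<in>I. z i) \<noteq> 0"
  shows "\<exists>t. a \<le> t \<and> t \<le> b \<and> (\<Sum>i\<in>I. z i) = rcis (cmod (\<Sum>i\<in>I. z i)) t"
proof -
  define m where "m = (a + b) / 2"
  define h where "h = (b - a) / 2"
  define w where "w = (\<Sum>i\<in>I. z i) * cis (-m)"
  have w0: "w \<noteq> 0" using assms(8) by (simp add: w_def)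
  have "Re w = (\<Sum>i\<in>I. r i * cos (t i - m))"
    by (simp add: w_def sum_distrib_right assms(2) rcis_cis_mult)
  also have "\<dots> \<ge> 0"
  proof (rule sum_nonneg, rule mult_nonneg_nonneg)
    fix i assume i: "i \<in> I"
    show "0 \<le> r i" using assms(3)[OF i] .
    show "0 \<le> cos (t i - m)"
      by (rule cos_ge_zero) (use assms(4,5)[OF i] assms(7) in \<open>simp_all add: m_def field_simps\<close>)
  qed
  finally have Rew: "Re w \<ge> 0" .
  have "Im (w * cis h) = (\<Sum>i\<in>I. r i * sin (t i - a))"
    by (simp add: w_def sum_distrib_right assms(2) rcis_cis_mult mult.assoc cis_mult m_def h_def
        diff_divide_distrib add_divide_distrib)
  also have "\<dots> \<ge> 0"
  proof (rule sum_nonneg, rule mult_nonneg_nonneg)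
    fix i assume i: "i \<in> I"
    show "0 \<le> r i" using assms(3)[OF i] .
    show "0 \<le> sin (t i - a)"
      by (rule sin_ge_zero) (use assms(4,5)[OF i] assms(7) in auto)
  qed
  finally have Im1: "Im (w * cis h) \<ge> 0" .
  have "Im (w * cis (-h)) = (\<Sum>i\<in>I. r i * sin (t i - b))"
    by (simp add: w_def sum_distrib_right assms(2) rcis_cis_mult mult.assoc cis_mult m_def h_def
        diff_divide_distrib add_divide_distrib)
  also have "\<dots> \<le> 0"
  proof (rule sum_nonpos)
    fix i assume i: "i \<in> I"
    have "0 \<le> sin (b - t i)"
      by (rule sin_ge_zero) (use assms(4,5)[OF i] assms(7) in auto)
    then have "sin (t i - b) \<le> 0" by (metis neg_0_le_iff_le minus_diff_eq sin_minus)
    then show "r i * sin (t i - b) \<le> 0" using assms(3)[OF i] by (simp add: mult_nonneg_nonpos)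
  qed
  finally have Im2: "Im (w * cis (-h)) \<le> 0" .
  define s where "s = Arg w"
  have wr: "w = rcis (cmod w) s" by (simp add: s_def rcis_cmod_Arg)
  have wpos: "cmod w > 0" using w0 by simp
  have s_bd: "\<bar>s\<bar> \<le> pi/2" using Rew Arg_Re_nonneg s_def by blast
  have h0: "0 \<le> h" "h < pi/2" using assms(6,7) by (auto simp: h_def)
  have "Im (w * cis h) = cmod w * sin (s + h)"
    by (subst wr) (simp add: rcis_cis_mult)
  then have sin1: "sin (s + h) \<ge> 0" using Im1 wpos by (simp add: zero_le_mult_iff)
  have "Im (w * cis (-h)) = cmod w * sin (s - h)"
    by (subst wr) (simp add: rcis_cis_mult)
  then have sin2: "sin (s - h) \<le> 0" using Im2 wpos by (simp add: mult_le_0_iff)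
  have s1: "- h \<le> s"
  proof (rule ccontr)
    assume "\<not> - h \<le> s"
    then have "0 < sin (- (s + h))" using s_bd h0 by (intro sin_gt_zero) auto
    then show False using sin1 sin_minus[of "s+h"] by linarith
  qed
  have s2: "s \<le> h"
  proof (rule ccontr)
    assume "\<not> s \<le> h"
    then have "0 < sin (s - h)" using s_bd h0 by (intro sin_gt_zero) auto
    then show False using sin2 by simp
  qed
  have "(\<Sum>i\<in>I. z i) = w * cis m" by (simp add: w_def mult.assoc cis_mult)
  also have "\<dots> = rcis (cmod w) (s + m)" by (subst wr) (simp add: rcis_cis_mult)
  finally have eq: "(\<Sum>i\<in>I. z i) = rcis (cmod w) (s + m)" .
  have "cmod w = cmod (\<Sum>i\<in>I. z i)" by (simp add: w_def norm_mult)
  moreover have "a \<le> s + m" "s + m \<le> b" using s1 s2 by (simp_all add: m_def h_def field_simps)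
  ultimately show ?thesis using eq by (intro exI[of _ "s + m"]) auto
qed

lemma csqrt_rcis:
  assumes "r \<ge> 0" "\<bar>t\<bar> < pi"
  shows "csqrt (rcis r t) = rcis (sqrt r) (t/2)"
proof (rule csqrt_unique)
  show "(rcis (sqrt r) (t/2))\<^sup>2 = rcis r t"
    using assms by (simp add: DeMoivre2)
  have "cos (t/2) > 0" using assms by (intro cos_gt_zero_pi) auto
  then show "0 < Re (rcis (sqrt r) (t / 2)) \<or> Re (rcis (sqrt r) (t / 2)) = 0 \<and> 0 \<le> Im (rcis (sqrt r) (t / 2))"
    using assms by (cases "r = 0") auto
qed

lemma sector_lower2:
  assumes "za = rcis ra ta" "zb = rcis rb tb" "ra \<ge> 0" "rb \<ge> 0" "\<bar>ta - m\<bar> \<le> \<delta>" "\<bar>tb - m\<bar> \<le> \<delta>" "\<delta> \<le> pi"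
  shows "cos \<delta> * (ra + rb) \<le> cmod (za + zb)"
  using sector_lower[of "{0::nat,1}" "\<lambda>i. if i=0 then za else zb" "\<lambda>i. if i=0 then ra else rb"
      "\<lambda>i. if i=0 then ta else tb" m \<delta>] assms by auto

lemma sector_lower3:
  assumes "za = rcis ra ta" "zb = rcis rb tb" "zc = rcis rc tc" "ra \<ge> 0" "rb \<ge> 0" "rc \<ge> 0"
    "\<bar>ta - m\<bar> \<le> \<delta>" "\<bar>tb - m\<bar> \<le> \<delta>" "\<bar>tc - m\<bar> \<le> \<delta>" "\<delta> \<le> pi"
  shows "cos \<delta> * (ra + rb + rc) \<le> cmod (za + zb + zc)"
  using sector_lower[of "{0::nat,1,2}" "\<lambda>i. if i=0 then za else if i = 1 then zb else zc"
      "\<lambda>i. if i=0 then ra else if i = 1 then rb else rc"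
      "\<lambda>i. if i=0 then ta else if i = 1 then tb else tc" m \<delta>] assms by (auto simp: add.assoc)

lemma sector_angle2:
  assumes "za = rcis ra ta" "zb = rcis rb tb" "ra \<ge> 0" "rb \<ge> 0"
    "a \<le> ta" "ta \<le> b" "a \<le> tb" "tb \<le> b" "b - a < pi" "za + zb \<noteq> 0"
  shows "\<exists>t. a \<le> t \<and> t \<le> b \<and> za + zb = rcis (cmod (za + zb)) t"
  using sector_angle[of "{0::nat,1}" "\<lambda>i. if i=0 then za else zb" "\<lambda>i. if i=0 then ra else rb"
      "\<lambda>i. if i=0 then ta else tb" a b] assms by auto

lemma vector_4 [simp]:
 "(vector [x,y,z,w] ::('a::zero)^4)$1 = x"
 "(vector [x,y,z,w] ::('a::zero)^4)$2 = y"
 "(vector [x,y,z,w] ::('a::zero)^4)$3 = z"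
 "(vector [x,y,z,w] ::('a::zero)^4)$4 = w"
  unfolding vector_def by simp_all

lemma det_4:
  "det (A::'a::comm_ring_1^4^4) = 
    A$1$1 * A$2$2 * A$3$3 * A$4$4 - A$1$1 * A$2$2 * A$3$4 * A$4$3 - A$1$1 * A$2$3 * A$3$2 * A$4$4 + A$1$1 * A$2$3 * A$3$4 * A$4$2 + A$1$1 * A$2$4 * A$3$2 * A$4$3 - A$1$1 * A$2$4 * A$3$3 * A$4$2 - A$1$2 * A$2$1 * A$3$3 * A$4$4 + A$1$2 * A$2$1 * A$3$4 * A$4$3 + A$1$2 * A$2$3 * A$3$1 * A$4$4 - A$1$2 * A$2$3 * A$3$4 * A$4$1 - A$1$2 * A$2$4 * A$3$1 * A$4$3 + A$1$2 * A$2$4 * A$3$3 * A$4$1 + A$1$3 * A$2$1 * A$3$2 * A$4$4 - A$1$3 * A$2$1 * A$3$4 * A$4$2 - A$1$3 * A$2$2 * A$3$1 * A$4$4 + A$1$3 * A$2$2 * A$3$4 * A$4$1 + A$1$3 * A$2$4 * A$3$1 * A$4$2 - A$1$3 * A$2$4 * A$3$2 * A$4$1 - A$1$4 * A$2$1 * A$3$2 * A$4$3 + A$1$4 * A$2$1 * A$3$3 * A$4$2 + A$1$4 * A$2$2 * A$3$1 * A$4$3 - A$1$4 * A$2$2 * A$3$3 * A$4$1 - A$1$4 * A$2$3 * A$3$1 * A$4$2 + A$1$4 * A$2$3 * A$3$2 * A$4$1"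
proof -
  have f1: "finite {2::4, 3, 4}" "1 \<notin> {2::4, 3, 4}" by auto
  have f2: "finite {3::4, 4}" "2 \<notin> {3::4, 4}" by auto
  have f3: "finite {4::4}" "3 \<notin> {4::4}" by auto
  show ?thesis
    unfolding det_def UNIV_4
    unfolding sum_over_permutations_insert[OF f1]
    unfolding sum_over_permutations_insert[OF f2]
    unfolding sum_over_permutations_insert[OF f3]
    unfolding permutes_sing
    by (simp add: sign_swap_id permutation_swap_id sign_compose permutation_compose sign_id swap_id_eq algebra_simps)
qed

lemma det_L:
  fixes \<xi> :: "complex ^ 'm" and lam :: complex and \<rho>p \<rho>m \<mu>p \<mu>m :: real
  assumes "\<mu>p > 0" "\<mu>m > 0"
  defines "A \<equiv> A_sym \<xi>" and "Bp \<equiv> B_sym \<rho>p \<mu>p lam \<xi>" and "Bm \<equiv> B_sym \<rho>m \<mu>m lam \<xi>"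
  shows "det (L_mat \<rho>p \<rho>m \<mu>p \<mu>m lam \<xi>) =
    of_real (\<rho>p + \<rho>m) * lam * ((of_real \<mu>p * Bp + of_real \<mu>m * A) + (of_real \<mu>m * Bm + of_real \<mu>p * A))
    + 4 * A * (of_real \<mu>p * Bp + of_real \<mu>m * A) * (of_real \<mu>m * Bm + of_real \<mu>p * A)"
proof -
  have hp: "Bp^2 = of_real (\<rho>p/\<mu>p) * lam + A^2" by (simp add: Bp_def B_sym_def A_def)
  have hm: "Bm^2 = of_real (\<rho>m/\<mu>m) * lam + A^2" by (simp add: Bm_def B_sym_def A_def)
  have e1: "of_real \<rho>p * lam = of_real \<mu>p * (Bp^2 - A^2)"
    using assms(1) by (simp add: hp of_real_divide field_simps)
  have e2: "of_real \<rho>m * lam = of_real \<mu>m * (Bm^2 - A^2)"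
    using assms(2) by (simp add: hm of_real_divide field_simps)
  have eq: "of_real (\<rho>p + \<rho>m) * lam = of_real \<mu>p * (Bp^2 - A^2) + of_real \<mu>m * (Bm^2 - A^2)"
    using e1 e2 by (simp add: distrib_right)
  show ?thesis
    unfolding eq
    by (simp add: det_4 L_mat_def Let_def flip: A_def Bp_def Bm_def) (simp add: algebra_simps power2_eq_square power3_eq_cube)
qed


lemma of_real_rcis: "of_real a * rcis r t = rcis (a * r) t"
  by (simp add: rcis_def mult.assoc)

lemma B_lemma:
  assumes "ap > 0" "l > 0" "\<bar>\<phi>\<bar> < pi - \<epsilon>" "\<sigma> > 0" "\<bar>s\<bar> \<le> 2*\<eta>" "2*\<eta> < \<epsilon>" "\<epsilon> < pi/2" "\<eta> > 0"
  shows "\<exists>\<beta> \<rho>B. csqrt (of_real ap * rcis l \<phi> + rcis \<sigma> s) = rcis \<rho>B \<beta> \<and>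
     sqrt (cos ((pi - \<epsilon> + 2*\<eta>)/2) * ap * l) \<le> \<rho>B \<and> min (\<phi>/2) (s/2) \<le> \<beta> \<and> \<beta> \<le> max (\<phi>/2) (s/2)"
proof -
  define W where "W = pi - \<epsilon> + 2*\<eta>"
  have W: "0 < W" "W < pi" using assms by (auto simp: W_def)
  have cW: "cos (W/2) > 0" using W by (intro cos_gt_zero_pi) auto
  define w where "w = rcis (ap*l) \<phi> + rcis \<sigma> s"
  have weq: "of_real ap * rcis l \<phi> + rcis \<sigma> s = w" by (simp add: w_def of_real_rcis)
  have d: "\<bar>\<phi> - s\<bar> < W" using assms unfolding W_def by arith
  have low: "cos (W/2) * (ap*l + \<sigma>) \<le> cmod w"
    unfolding w_def
    by (rule sector_lower2[where m="(\<phi>+s)/2"]) (use assms d W in \<open>auto simp: abs_le_iff abs_less_iff field_simps\<close>)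
  have "0 < cos (W/2) * (ap*l + \<sigma>)" using cW assms by (intro mult_pos_pos add_pos_pos) auto
  with low have wpos: "cmod w > 0" by linarith
  then have w0: "w \<noteq> 0" by auto
  have mm: "max \<phi> s - min \<phi> s < pi" using d W by (simp add: max_def min_def) arith
  obtain t where t: "min \<phi> s \<le> t" "t \<le> max \<phi> s" "w = rcis (cmod w) t"
    using sector_angle2[of "rcis (ap*l) \<phi>" "ap*l" \<phi> "rcis \<sigma> s" \<sigma> s "min \<phi> s" "max \<phi> s"] assms d W w0 mm
    unfolding w_def by (auto simp: abs_less_iff)
  have tb: "\<bar>t\<bar> < pi" using t(1,2) assms by (auto simp: abs_less_iff)
  have B: "csqrt w = rcis (sqrt (cmod w)) (t/2)"
    by (subst t(3)) (rule csqrt_rcis, simp, fact tb)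
  have "cos (W/2) * ap * l \<le> cos (W/2) * (ap*l + \<sigma>)"
    using cW assms by (simp add: algebra_simps)
  with low have "sqrt (cos (W/2) * ap * l) \<le> sqrt (cmod w)"
    by (intro real_sqrt_le_mono) linarith
  then show ?thesis
    using B t(1,2) unfolding weq W_def[symmetric]
    by (intro exI[of _ "t/2"] exI[of _ "sqrt (cmod w)"]) (auto simp: min_def max_def)
qed

lemma XY_lemma:
  assumes "B = rcis \<rho>B \<beta>" "A = rcis v \<alpha>" "\<rho>B \<ge> 0" "v > 0" "mu1 > 0" "mu2 > 0"
    "lo \<le> \<beta>" "\<beta> \<le> hi" "lo \<le> \<alpha>" "\<alpha> \<le> hi" "hi - lo \<le> W/2" "0 < W" "W < pi"
  shows "\<exists>x. lo \<le> x \<and> x \<le> hi \<and>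
     of_real mu1 * B + of_real mu2 * A = rcis (cmod (of_real mu1 * B + of_real mu2 * A)) x \<and>
     cos (W/4) * (mu1 * \<rho>B + mu2 * v) \<le> cmod (of_real mu1 * B + of_real mu2 * A)"
proof -
  have e1: "of_real mu1 * B = rcis (mu1 * \<rho>B) \<beta>" "of_real mu2 * A = rcis (mu2 * v) \<alpha>"
    using assms by (simp_all add: of_real_rcis)
  have cW: "cos (W/4) > 0" using assms by (intro cos_gt_zero_pi) auto
  have a1: "\<bar>\<beta> - (lo+hi)/2\<bar> \<le> W/4" by (rule abs_leI) (use assms(7,8,11) in \<open>simp add: field_simps\<close>)+
  have a2: "\<bar>\<alpha> - (lo+hi)/2\<bar> \<le> W/4" by (rule abs_leI) (use assms(9,10,11) in \<open>simp add: field_simps\<close>)+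
  have a3: "W/4 \<le> pi" using assms(12,13) by linarith
  have low: "cos (W/4) * (mu1 * \<rho>B + mu2 * v) \<le> cmod (of_real mu1 * B + of_real mu2 * A)"
    unfolding e1
    by (rule sector_lower2[where ta=\<beta> and tb=\<alpha> and m="(lo+hi)/2"]) (use assms a1 a2 a3 in auto)
  have "0 < cos (W/4) * (mu1 * \<rho>B + mu2 * v)"
    using cW assms by (intro mult_pos_pos add_nonneg_pos) auto
  with low have "of_real mu1 * B + of_real mu2 * A \<noteq> 0" by auto
  then obtain x where "lo \<le> x" "x \<le> hi" "of_real mu1 * B + of_real mu2 * A = rcis (cmod (of_real mu1 * B + of_real mu2 * A)) x"
    using sector_angle2[OF e1, of lo hi] assms by auto
  with low show ?thesis by blast
qed


lemma sq_angle:
  assumes "z \<in> Sigma_tilde \<eta>" "0 < \<eta>"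
  shows "\<exists>t. \<bar>t\<bar> \<le> 2*\<eta> \<and> z^2 = rcis ((cmod z)^2) t"
proof -
  define \<theta> where "\<theta> = Arg z"
  have zr: "z = rcis (cmod z) \<theta>" by (simp add: \<theta>_def rcis_cmod_Arg)
  have z2: "z^2 = rcis ((cmod z)^2) (2*\<theta>)"
    by (subst zr) (simp add: DeMoivre2)
  have bd: "- pi < \<theta>" "\<theta> \<le> pi" using Arg_bounded \<theta>_def by auto
  have c: "\<bar>\<theta>\<bar> < \<eta> \<or> pi - \<eta> < \<bar>\<theta>\<bar>" using assms(1) by (simp add: Sigma_tilde_def \<theta>_def)
  have p1: "rcis r (x - 2*pi) = rcis r x" for r x by (simp add: rcis_def cis.ctr complex_eq_iff cos_diff sin_diff)
  have p2: "rcis r (x + 2*pi) = rcis r x" for r x by (simp add: rcis_def cis.ctr complex_eq_iff cos_add sin_add)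
  show ?thesis
  proof (cases "\<bar>\<theta>\<bar> < \<eta>")
    case True
    then show ?thesis using z2 by (intro exI[of _ "2*\<theta>"]) auto
  next
    case False
    then have c2: "pi - \<eta> < \<bar>\<theta>\<bar>" using c by auto
    show ?thesis
    proof (cases "\<theta> > 0")
      case True
      then show ?thesis using z2 c2 bd p1[of "(cmod z)^2" "2*\<theta>"]
        by (intro exI[of _ "2*\<theta> - 2*pi"]) auto
    next
      case False
      then show ?thesis using z2 c2 bd p2[of "(cmod z)^2" "2*\<theta>"]
        by (intro exI[of _ "2*\<theta> + 2*pi"]) auto
    qed
  qed
qed

lemma xi_lemma:
  fixes \<xi> :: "complex ^ 'm"
  assumes "\<forall>j. \<xi>$j \<in> Sigma_tilde \<eta>" "0 < \<eta>" "\<eta> < pi/4"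
  shows "\<exists>\<sigma> s. \<sigma> > 0 \<and> \<bar>s\<bar> \<le> 2*\<eta> \<and> (\<Sum>j\<in>UNIV. (\<xi>$j)^2) = rcis \<sigma> s \<and>
     A_sym \<xi> = rcis (sqrt \<sigma>) (s/2) \<and> sqrt (cos (2*\<eta>)) * A_tilde \<xi> \<le> sqrt \<sigma>"
proof -
  define S where "S = (\<Sum>j\<in>UNIV. (\<xi>$j)^2)"
  define tt where "tt j = (SOME t. \<bar>t\<bar> \<le> 2*\<eta> \<and> (\<xi>$j)^2 = rcis ((cmod (\<xi>$j))^2) t)" for j
  have tt: "\<bar>tt j\<bar> \<le> 2*\<eta> \<and> (\<xi>$j)^2 = rcis ((cmod (\<xi>$j))^2) (tt j)" for j
    unfolding tt_def by (rule someI_ex) (rule sq_angle[OF assms(1)[rule_format] assms(2)])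
  have c2: "cos (2*\<eta>) > 0" using assms by (intro cos_gt_zero_pi) auto
  have low: "cos (2*\<eta>) * (\<Sum>j\<in>UNIV. (cmod (\<xi>$j))^2) \<le> cmod S"
    unfolding S_def
    by (rule sector_lower[where t=tt and m=0]) (use tt assms in auto)
  have nz: "\<xi>$j \<noteq> 0" for j using assms(1) by (simp add: Sigma_tilde_def)
  have pos: "(\<Sum>j\<in>UNIV. (cmod (\<xi>$j))^2) > 0"
    by (rule sum_pos) (use nz in auto)
  have "0 < cos (2*\<eta>) * (\<Sum>j\<in>UNIV. (cmod (\<xi>$j))^2)" using c2 pos by simp
  with low have Spos: "cmod S > 0" by linarith
  then have S0: "S \<noteq> 0" by auto
  have tlo: "-(2*\<eta>) \<le> tt j" and thi: "tt j \<le> 2*\<eta>" and teq: "(\<xi>$j)^2 = rcis ((cmod (\<xi>$j))^2) (tt j)" for j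
    using tt[of j] by (auto simp: abs_le_iff)
  have "\<exists>t. -(2*\<eta>) \<le> t \<and> t \<le> 2*\<eta> \<and> S = rcis (cmod S) t"
    unfolding S_def
    by (rule sector_angle[where r="\<lambda>j. (cmod (\<xi>$j))^2" and t=tt]) (use tlo thi teq assms S0 in \<open>auto simp: S_def\<close>)
  then obtain s where s: "-(2*\<eta>) \<le> s" "s \<le> 2*\<eta>" "S = rcis (cmod S) s" by blast
  have sb: "\<bar>s\<bar> \<le> 2*\<eta>" using s by auto
  have A: "A_sym \<xi> = rcis (sqrt (cmod S)) (s/2)"
    unfolding A_sym_def S_def[symmetric] by (subst s(3)) (rule csqrt_rcis, simp, use sb assms in auto)
  have "sqrt (cos (2*\<eta>)) * A_tilde \<xi> = sqrt (cos (2*\<eta>) * (\<Sum>j\<in>UNIV. (cmod (\<xi>$j))^2))"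
    by (simp add: A_tilde_def real_sqrt_mult)
  also have "\<dots> \<le> sqrt (cmod S)" using low by (rule real_sqrt_le_mono)
  finally show ?thesis using Spos sb s(3) A unfolding S_def
    by (intro exI[of _ "cmod S"] exI[of _ s]) (auto simp: S_def)
qed



lemma ang_aux:
  fixes a b x W :: real
  assumes "min (a/2) (b/2) \<le> x" "x \<le> max (a/2) (b/2)" "\<bar>a - b\<bar> \<le> W"
  shows "\<bar>(a - x) - a/2\<bar> \<le> W/2"
proof (cases "a \<le> b")
  case True
  then have h: "a/2 \<le> x" "x \<le> b/2" using assms(1,2) by (auto simp: min_def max_def)
  have w: "b - a \<le> W" using assms(3) True by simp
  show ?thesis by (rule abs_leI) (use h w in linarith)+
next
  case False
  then have h: "b/2 \<le> x" "x \<le> a/2" using assms(1,2) by (auto simp: min_def max_def)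
  have w: "a - b \<le> W" using assms(3) False by simp
  show ?thesis by (rule abs_leI) (use h w in linarith)+
qed

theorem lemma5p3:
  fixes \<rho>p \<rho>m \<mu>p \<mu>m \<epsilon> \<eta> :: real
  assumes "\<rho>p > 0" "\<rho>m > 0" "\<mu>p > 0" "\<mu>m > 0"
    and "0 < \<epsilon>" "\<epsilon> < pi / 2"
    and "0 < \<eta>" "\<eta> < min (pi / 4) (\<epsilon> / 2)"
  shows "\<exists>c > 0. \<forall>lam \<in> Sigma_sec \<epsilon>. \<forall>\<xi> :: complex ^ 'm.
           (\<forall>j. \<xi> $ j \<in> Sigma_tilde \<eta>) \<longrightarrow>
           c * (sqrt (cmod lam) + A_tilde \<xi>) ^ 3 \<le> cmod (det (L_mat \<rho>p \<rho>m \<mu>p \<mu>m lam \<xi>))"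
proof -
  have eta1: "\<eta> < pi/4" and eta2: "2*\<eta> < \<epsilon>" using assms(8) by auto
  define W where "W = pi - \<epsilon> + 2*\<eta>"
  have W: "0 < W" "W < pi" using assms eta2 by (auto simp: W_def)
  define cW where "cW = cos (W/2)"
  have cW: "cW > 0" unfolding cW_def using W by (intro cos_gt_zero_pi) auto
  define k where "k = cos (W/4)"
  have k: "k > 0" unfolding k_def using W by (intro cos_gt_zero_pi) auto
  define \<kappa> where "\<kappa> = sqrt (cos (2*\<eta>))"
  have c2e: "cos (2*\<eta>) > 0" using eta1 assms by (intro cos_gt_zero_pi) auto
  have \<kappa>: "\<kappa> > 0" "\<kappa> \<le> 1" unfolding \<kappa>_def using c2e by auto
  define ap where "ap = \<rho>p / \<mu>p"
  define am where "am = \<rho>m / \<mu>m"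
  have ap: "ap > 0" and am: "am > 0" using assms by (auto simp: ap_def am_def)
  define R where "R = \<rho>p + \<rho>m"
  have R: "R > 0" using assms by (auto simp: R_def)
  define c1 where "c1 = k * min (\<mu>p * sqrt (cW*ap)) \<mu>m"
  define c2 where "c2 = k * min (\<mu>m * sqrt (cW*am)) \<mu>p"
  have c1: "c1 > 0" and c2: "c2 > 0" using k cW ap am assms by (auto simp: c1_def c2_def)
  define c where "c = cW * c1 * min R (4*c2) / 2 * \<kappa>^3"
  have c: "c > 0" using cW c1 c2 R \<kappa> by (auto simp: c_def)
  show ?thesis
  proof (intro exI[of _ c] conjI ballI allI impI)
    show "c > 0" by (fact c)
    fix lam :: complex and \<xi> :: "complex ^ 'm"
    assume lam: "lam \<in> Sigma_sec \<epsilon>" and xi: "\<forall>j. \<xi>$j \<in> Sigma_tilde \<eta>"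
    obtain \<sigma> s where \<sigma>: "\<sigma> > 0" "\<bar>s\<bar> \<le> 2*\<eta>" "(\<Sum>j\<in>UNIV. (\<xi>$j)^2) = rcis \<sigma> s"
      "A_sym \<xi> = rcis (sqrt \<sigma>) (s/2)" "\<kappa> * A_tilde \<xi> \<le> sqrt \<sigma>"
      using xi_lemma[OF xi assms(7) eta1] unfolding \<kappa>_def by blast
    define l where "l = cmod lam"
    define \<phi> where "\<phi> = Arg lam"
    have lam0: "lam \<noteq> 0" and phib: "\<bar>\<phi>\<bar> < pi - \<epsilon>" using lam by (auto simp: Sigma_sec_def \<phi>_def)
    have l: "l > 0" using lam0 by (simp add: l_def)
    have lamr: "lam = rcis l \<phi>" by (simp add: l_def \<phi>_def rcis_cmod_Arg)
    define A where "A = A_sym \<xi>"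
    define Bp where "Bp = B_sym \<rho>p \<mu>p lam \<xi>"
    define Bm where "Bm = B_sym \<rho>m \<mu>m lam \<xi>"
    have A2: "A^2 = rcis \<sigma> s" using \<sigma>(3) by (simp add: A_def A_sym_def)
    have Ar: "A = rcis (sqrt \<sigma>) (s/2)" using \<sigma>(4) by (simp add: A_def)
    have Bp_eq: "Bp = csqrt (of_real ap * rcis l \<phi> + rcis \<sigma> s)"
      by (simp add: Bp_def B_sym_def ap_def A2[unfolded A_def] flip: lamr)
    have Bm_eq: "Bm = csqrt (of_real am * rcis l \<phi> + rcis \<sigma> s)"
      by (simp add: Bm_def B_sym_def am_def A2[unfolded A_def] flip: lamr)
    obtain \<beta>p \<rho>Bp where Bpr: "Bp = rcis \<rho>Bp \<beta>p" "sqrt (cW * ap * l) \<le> \<rho>Bp"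
      "min (\<phi>/2) (s/2) \<le> \<beta>p" "\<beta>p \<le> max (\<phi>/2) (s/2)"
      using B_lemma[OF ap l phib \<sigma>(1) \<sigma>(2) eta2 assms(6) assms(7)] unfolding Bp_eq cW_def W_def by blast
    obtain \<beta>m \<rho>Bm where Bmr: "Bm = rcis \<rho>Bm \<beta>m" "sqrt (cW * am * l) \<le> \<rho>Bm"
      "min (\<phi>/2) (s/2) \<le> \<beta>m" "\<beta>m \<le> max (\<phi>/2) (s/2)"
      using B_lemma[OF am l phib \<sigma>(1) \<sigma>(2) eta2 assms(6) assms(7)] unfolding Bm_eq cW_def W_def by blast
    have dphis: "\<bar>\<phi> - s\<bar> \<le> W"
      using phib \<sigma>(2) unfolding W_def abs_le_iff abs_less_iff by (intro conjI; linarith)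
    have hl: "max (\<phi>/2) (s/2) - min (\<phi>/2) (s/2) \<le> W/2" using dphis by (auto simp: max_def min_def abs_le_iff)
    have "0 \<le> sqrt (cW * ap * l)" "0 \<le> sqrt (cW * am * l)" using cW ap am l by auto
    then have rBp: "\<rho>Bp \<ge> 0" "\<rho>Bm \<ge> 0" using Bpr(2) Bmr(2) by linarith+
    define X where "X = of_real \<mu>p * Bp + of_real \<mu>m * A"
    define Y where "Y = of_real \<mu>m * Bm + of_real \<mu>p * A"
    have lo_s: "min (\<phi>/2) (s/2) \<le> s/2" and hi_s: "s/2 \<le> max (\<phi>/2) (s/2)" by simp_all
    have sgs: "sqrt \<sigma> > 0" using \<sigma>(1) by simp
    obtain x where x: "min (\<phi>/2) (s/2) \<le> x" "x \<le> max (\<phi>/2) (s/2)" "X = rcis (cmod X) x"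
      "k * (\<mu>p * \<rho>Bp + \<mu>m * sqrt \<sigma>) \<le> cmod X"
      using XY_lemma[OF Bpr(1) Ar rBp(1) sgs assms(3) assms(4) Bpr(3,4) lo_s hi_s hl W] unfolding X_def[symmetric] k_def[symmetric]
      by blast
    obtain y where y: "min (\<phi>/2) (s/2) \<le> y" "y \<le> max (\<phi>/2) (s/2)" "Y = rcis (cmod Y) y"
      "k * (\<mu>m * \<rho>Bm + \<mu>p * sqrt \<sigma>) \<le> cmod Y"
      using XY_lemma[OF Bmr(1) Ar rBp(2) sgs assms(4) assms(3) Bmr(3,4) lo_s hi_s hl W] unfolding Y_def[symmetric] k_def[symmetric]
      by blast
    have Xpos: "cmod X > 0" using x(4) k assms sgs rBp
      proof -
      have "0 < k * (\<mu>p * \<rho>Bp + \<mu>m * sqrt \<sigma>)" using k assms(3,4) sgs rBp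
        by (intro mult_pos_pos add_nonneg_pos mult_nonneg_nonneg) auto
      then show ?thesis using x(4) by linarith
    qed
    have Ypos: "cmod Y > 0" using y(4) k assms sgs rBp
      proof -
      have "0 < k * (\<mu>m * \<rho>Bm + \<mu>p * sqrt \<sigma>)" using k assms(3,4) sgs rBp
        by (intro mult_pos_pos add_nonneg_pos mult_nonneg_nonneg) auto
      then show ?thesis using y(4) by linarith
    qed
    have X0: "X \<noteq> 0" and Y0: "Y \<noteq> 0" using Xpos Ypos by auto
    have det: "det (L_mat \<rho>p \<rho>m \<mu>p \<mu>m lam \<xi>) = of_real R * lam * (X + Y) + 4 * A * X * Y"
      unfolding det_L[OF assms(3,4)] R_def X_def Y_def A_def Bp_def Bm_def by simp
    define T1 where "T1 = of_real R * lam / X"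
    define T2 where "T2 = of_real R * lam / Y"
    define T3 where "T3 = 4 * A"
    have det2: "det (L_mat \<rho>p \<rho>m \<mu>p \<mu>m lam \<xi>) = X * Y * (T1 + T2 + T3)"
      unfolding det T1_def T2_def T3_def using X0 Y0 by (simp add: field_simps)
    have T1r: "T1 = rcis (R * l / cmod X) (\<phi> - x)"
      unfolding T1_def by (subst x(3), subst lamr) (simp add: of_real_rcis rcis_divide)
    have T2r: "T2 = rcis (R * l / cmod Y) (\<phi> - y)"
      unfolding T2_def by (subst y(3), subst lamr) (simp add: of_real_rcis rcis_divide)
    have T3r: "T3 = rcis (4 * sqrt \<sigma>) (s/2)"
      unfolding T3_def Ar using of_real_rcis[of 4 "sqrt \<sigma>" "s/2"] by simp
    have a1: "\<bar>(\<phi> - x) - \<phi>/2\<bar> \<le> W/2" using ang_aux[OF x(1,2) dphis] .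
    have a2: "\<bar>(\<phi> - y) - \<phi>/2\<bar> \<le> W/2" using ang_aux[OF y(1,2) dphis] .
    have dp1: "\<phi> - s \<le> W" and dp2: "s - \<phi> \<le> W" using dphis by (simp_all add: abs_le_iff)
    have a3: "\<bar>s/2 - \<phi>/2\<bar> \<le> W/2" by (rule abs_leI; use dp1 dp2 in \<open>simp add: field_simps\<close>)
    have Tlow: "cW * (R * l / cmod X + R * l / cmod Y + 4 * sqrt \<sigma>) \<le> cmod (T1 + T2 + T3)"
      unfolding cW_def
      by (rule sector_lower3[OF T1r T2r T3r _ _ _ a1 a2 a3]) (use R l Xpos Ypos sgs W in auto)
    have main1: "cW * (R * l * cmod Y + R * l * cmod X + 4 * sqrt \<sigma> * cmod X * cmod Y)
        \<le> cmod (det (L_mat \<rho>p \<rho>m \<mu>p \<mu>m lam \<xi>))"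
    proof -
      have "cW * (R * l * cmod Y + R * l * cmod X + 4 * sqrt \<sigma> * cmod X * cmod Y)
          = cmod X * cmod Y * (cW * (R * l / cmod X + R * l / cmod Y + 4 * sqrt \<sigma>))"
        using Xpos Ypos by (simp add: field_simps)
      also have "\<dots> \<le> cmod X * cmod Y * cmod (T1 + T2 + T3)"
        using Tlow Xpos Ypos by (intro mult_left_mono) auto
      also have "\<dots> = cmod (det (L_mat \<rho>p \<rho>m \<mu>p \<mu>m lam \<xi>))" by (simp add: det2 norm_mult)
      finally show ?thesis .
    qed
    define u where "u = sqrt l"
    define v where "v = sqrt \<sigma>"
    have u: "u > 0" and v: "v > 0" using l \<sigma>(1) by (auto simp: u_def v_def)
    have lu: "l = u^2" using l by (simp add: u_def)
    have "sqrt (cW * ap * l) = sqrt (cW * ap) * u" by (simp add: u_def real_sqrt_mult)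
    then have rp: "sqrt (cW * ap) * u \<le> \<rho>Bp" using Bpr(2) by simp
    have "sqrt (cW * am * l) = sqrt (cW * am) * u" by (simp add: u_def real_sqrt_mult)
    then have rm: "sqrt (cW * am) * u \<le> \<rho>Bm" using Bmr(2) by simp
    have Xl: "c1 * (u + v) \<le> cmod X"
    proof -
      have "c1 * (u + v) \<le> k * (\<mu>p * sqrt (cW*ap) * u + \<mu>m * v)"
        proof -
          have m1: "min (\<mu>p * sqrt (cW*ap)) \<mu>m * u \<le> (\<mu>p * sqrt (cW*ap)) * u" by (rule mult_right_mono) (use u in auto)
          have m2: "min (\<mu>p * sqrt (cW*ap)) \<mu>m * v \<le> \<mu>m * v" by (rule mult_right_mono) (use v in auto)
          have "c1 * (u + v) = k * (min (\<mu>p * sqrt (cW*ap)) \<mu>m * u + min (\<mu>p * sqrt (cW*ap)) \<mu>m * v)" by (simp add: c1_def algebra_simps)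
          also have "\<dots> \<le> k * ((\<mu>p * sqrt (cW*ap)) * u + \<mu>m * v)" using m1 m2 k by (intro mult_left_mono) auto
          finally show ?thesis by (simp add: mult.assoc)
        qed
      also have "\<dots> \<le> k * (\<mu>p * \<rho>Bp + \<mu>m * v)"
        using rp k assms(3) by (intro mult_left_mono add_right_mono) (auto simp: mult.assoc)
      finally show ?thesis using x(4) unfolding v_def by linarith
    qed
    have Yl: "c2 * (u + v) \<le> cmod Y"
    proof -
      have "c2 * (u + v) \<le> k * (\<mu>m * sqrt (cW*am) * u + \<mu>p * v)"
        proof -
          have m1: "min (\<mu>m * sqrt (cW*am)) \<mu>p * u \<le> (\<mu>m * sqrt (cW*am)) * u" by (rule mult_right_mono) (use u in auto)
          have m2: "min (\<mu>m * sqrt (cW*am)) \<mu>p * v \<le> \<mu>p * v" by (rule mult_right_mono) (use v in auto)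
          have "c2 * (u + v) = k * (min (\<mu>m * sqrt (cW*am)) \<mu>p * u + min (\<mu>m * sqrt (cW*am)) \<mu>p * v)" by (simp add: c2_def algebra_simps)
          also have "\<dots> \<le> k * ((\<mu>m * sqrt (cW*am)) * u + \<mu>p * v)" using m1 m2 k by (intro mult_left_mono) auto
          finally show ?thesis by (simp add: mult.assoc)
        qed
      also have "\<dots> \<le> k * (\<mu>m * \<rho>Bm + \<mu>p * v)"
        using rm k assms(4) by (intro mult_left_mono add_right_mono) (auto simp: mult.assoc)
      finally show ?thesis using y(4) unfolding v_def by linarith
    qed
    define M where "M = min R (4*c2)"
    have M: "M > 0" "M \<le> R" "M \<le> 4*c2" using R c2 by (auto simp: M_def)
    have s1: "M * (u^2 + v^2) \<le> R * l + 4 * v * cmod Y"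
    proof -
      have "M * (u^2 + v^2) \<le> R * u^2 + 4 * c2 * v^2"
        proof -
          have "M * u^2 \<le> R * u^2" using M by (intro mult_right_mono) auto
          moreover have "M * v^2 \<le> 4 * c2 * v^2" using M by (intro mult_right_mono) auto
          ultimately show ?thesis by (simp add: distrib_left)
        qed
      also have "4 * c2 * v^2 \<le> 4 * v * cmod Y"
      proof -
        have "c2 * v \<le> c2 * (u + v)" using c2 u by simp
        also have "\<dots> \<le> cmod Y" by (fact Yl)
        finally have c2v: "c2 * v \<le> cmod Y" .
        show ?thesis proof -
          have "4 * c2 * v^2 = 4 * v * (c2 * v)" by (simp add: power2_eq_square algebra_simps)
          also have "\<dots> \<le> 4 * v * cmod Y" using c2v v by (intro mult_left_mono) auto
          finally show ?thesis .
        qed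
      qed
      then have "R * u^2 + 4 * c2 * v^2 \<le> R * l + 4 * v * cmod Y" using lu by simp
      finally show ?thesis .
    qed
    have s2: "cW * c1 * (u + v) * (M * (u^2 + v^2)) \<le> cmod (det (L_mat \<rho>p \<rho>m \<mu>p \<mu>m lam \<xi>))"
    proof -
      have "cW * c1 * (u + v) * (M * (u^2 + v^2)) \<le> cW * cmod X * (R * l + 4 * v * cmod Y)"
      proof -
        have "c1 * (u + v) * (M * (u^2 + v^2)) \<le> cmod X * (R * l + 4 * v * cmod Y)"
          using Xl s1 c1 u v M by (intro mult_mono) auto
        then show ?thesis using cW by (simp add: mult.assoc mult_left_mono)
      qed
      also have "\<dots> \<le> cW * (R * l * cmod Y + R * l * cmod X + 4 * sqrt \<sigma> * cmod X * cmod Y)"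
        proof -
          have e1: "cW * cmod X * (R * l + 4 * v * cmod Y) = cW * (R * l * cmod X + 4 * sqrt \<sigma> * cmod X * cmod Y)"
            by (simp add: v_def algebra_simps)
          have e2: "cW * (R * l * cmod Y + R * l * cmod X + 4 * sqrt \<sigma> * cmod X * cmod Y)
              = cW * (R * l * cmod Y) + cW * (R * l * cmod X + 4 * sqrt \<sigma> * cmod X * cmod Y)"
            by (simp add: algebra_simps)
          have "0 \<le> cW * (R * l * cmod Y)" using cW R l by simp
          then show ?thesis unfolding e1 e2 by linarith
        qed
      finally show ?thesis using main1 by linarith
    qed
    have s3: "(u + v)^3 \<le> 2 * (u + v) * (u^2 + v^2)"
    proof -
      have "(u+v)^2 \<le> 2 * (u^2 + v^2)" proof -
        have "(u+v)^2 = 2*(u^2+v^2) - (u-v)^2" by (simp add: power2_eq_square algebra_simps)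
        moreover have "0 \<le> (u-v)^2" by simp
        ultimately show ?thesis by linarith
      qed
      then have "(u+v) * (u+v)^2 \<le> (u+v) * (2 * (u^2 + v^2))" using u v by (intro mult_left_mono) auto
      then show ?thesis proof -
        have "(u+v)^3 = (u+v)*(u+v)^2" by (simp add: power3_eq_cube power2_eq_square)
        moreover have "(u+v)*(2*(u^2+v^2)) = 2*(u+v)*(u^2+v^2)" by (simp add: algebra_simps)
        ultimately show ?thesis using \<open>(u+v) * (u+v)^2 \<le> (u+v) * (2 * (u^2 + v^2))\<close> by simp
      qed
    qed
    have s4: "\<kappa> * (sqrt (cmod lam) + A_tilde \<xi>) \<le> u + v"
    proof -
      have "\<kappa> * sqrt (cmod lam) \<le> u" using \<kappa> u by (simp add: u_def l_def mult_left_le_one_le)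
      then show ?thesis using \<sigma>(5) unfolding v_def by (simp add: distrib_left)
    qed
    have s5: "(\<kappa> * (sqrt (cmod lam) + A_tilde \<xi>))^3 \<le> (u + v)^3"
    proof (rule power_mono[OF s4])
      show "0 \<le> \<kappa> * (sqrt (cmod lam) + A_tilde \<xi>)" using \<kappa> by (intro mult_nonneg_nonneg add_nonneg_nonneg) (auto simp: A_tilde_def intro!: sum_nonneg)
    qed
    have "c * (sqrt (cmod lam) + A_tilde \<xi>) ^ 3 = cW * c1 * M / 2 * (\<kappa> * (sqrt (cmod lam) + A_tilde \<xi>))^3"
      by (simp add: c_def M_def power_mult_distrib)
    also have "\<dots> \<le> cW * c1 * M / 2 * (u + v)^3"
      using s5 cW c1 M by (intro mult_left_mono) auto
    also have "\<dots> \<le> cW * c1 * M / 2 * (2 * (u + v) * (u^2 + v^2))"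
      using s3 cW c1 M by (intro mult_left_mono) auto
    also have "\<dots> = cW * c1 * (u + v) * (M * (u^2 + v^2))" by (simp add: field_simps)
    also have "\<dots> \<le> cmod (det (L_mat \<rho>p \<rho>m \<mu>p \<mu>m lam \<xi>))" by (fact s2)
    finally show "c * (sqrt (cmod lam) + A_tilde \<xi>) ^ 3 \<le> cmod (det (L_mat \<rho>p \<rho>m \<mu>p \<mu>m lam \<xi>))" .
  qed
qed

end
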